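(* Let $(R,\mathcal C)$ be a pair and $\mathfrak a$ a radical $\mathcal C$-ideal such that $(R,\mathcal C)$ is non-degenerate along $\mathfrak a$. Let $b$ be a test element of $(R,\mathcal C)$ along $\mathfrak a$. Then $\tau_{\mathfrak a}(R,\mathcal C)=Rb+\mathcal C_+b$. Furthermore, $(R,\mathcal C)$ is purely $F$-regular along $\mathfrak a$ if and only if $1$ is a principal test element of $(R,\mathcal C)$ along $\mathfrak a$, i.e. for every $r\in R$ not in any associated prime of $R/\mathfrak a$ there exist $e>0$ and $\phi\in\mathcal C_e$ with $\phi(F^e_*r)=1$.
   Context: All rings are noetherian $F$-finite commutative $\mathbb F_p$-algebras. $F^e_*R$ is $R$ viewed as an $R$-module via the $e$-th Frobenius, $\mathcal C_{e,R}=\operatorname{Hom}_R(F^e_*R,R)$, $\mathcal C_R=\bigoplus_{e\ge0}\mathcal C_{e,R}$ with product $\phi\cdot\phi'=\phi\circ F^e_*\phi'$. A pair $(R,\mathcal C)$ consists of $R$ and a graded $R$-subalgebra $\mathcal C\subseteq\mathcal C_R$; $\mathcal C_+=\bigoplus_{e>0}\mathcal C_e$. A $\mathcal C$-ideal is an ideal $\mathfrak b$ with $\phi(F^e_*\mathfrak b)\subseteq\mathfrak b$ for all $\phi\in\mathcal C_e$. $\mathcal C_+b$ denotes the ideal generated by all $\phi(F^e_*(rb))$, $e>0$, $\phi\in\mathcal C_e$, $r\in R$. A prime $\mathcal C$-ideal $\mathfrak p$ is a center of $F$-purity if $\mathcal C_+R\not\subseteq\mathfrak p$; $(R,\mathcal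 C)$ is non-degenerate along $\mathfrak a$ if all minimal primes of $\mathfrak a$ are centers of $F$-purity, and purely $F$-regular along $\mathfrak a$ if moreover every proper $\mathcal C$-ideal lies in some minimal prime of $\mathfrak a$. Let $U=\bigcup_{\mathfrak q\in\operatorname{Ass}(R/\mathfrak a)}\mathfrak q$. A principal test element along $\mathfrak a$ is $c\notin U$ such that for every $r\notin U$ there are $e>0$, $\phi\in\mathcal C_e$ with $\phi(F^e_*r)=c$ (such elements exist under the hypotheses). The test ideal $\tau_{\mathfrak a}(R,\mathcal C)$ is the smallest $\mathcal C$-ideal not contained in $U$ (equivalently $Rc+\mathcal C_+c$ for a principal test element $c$); a test element is an element of $\tau_{\mathfrak a}(R,\mathcal C)\setminus U$. *)

theory Defs
  imports "HOL-Computational_Algebra.Primes"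
begin

text \<open>The ring R is the type 'a (a commutative ring with 1); p is its characteristic.\<close>

definition is_ideal :: "'a::comm_ring_1 set \<Rightarrow> bool" where
  "is_ideal I \<longleftrightarrow> 0 \<in> I \<and> (\<forall>x\<in>I. \<forall>y\<in>I. x + y \<in> I) \<and> (\<forall>r. \<forall>x\<in>I. r * x \<in> I)"

definition ideal_span :: "'a::comm_ring_1 set \<Rightarrow> 'a set" where
  "ideal_span S = \<Inter>{I. is_ideal I \<and> S \<subseteq> I}"

definition principal_ideal :: "'a::comm_ring_1 \<Rightarrow> 'a set" where
  "principal_ideal b = {r * b | r. True}"

definition prime_ideal :: "'a::comm_ring_1 set \<Rightarrow> bool" where
  "prime_ideal P \<longleftrightarrow> is_ideal P \<and> P \<noteq> UNIV \<and> (\<forall>x y. x * y \<in> P \<longrightarrow> x \<in> P \<or> y \<in> P)"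

definition radical_ideal :: "'a::comm_ring_1 set \<Rightarrow> bool" where
  "radical_ideal I \<longleftrightarrow> is_ideal I \<and> (\<forall>x n. x ^ n \<in> I \<longrightarrow> x \<in> I)"

definition noetherian_ring :: "'a::comm_ring_1 itself \<Rightarrow> bool" where
  "noetherian_ring _ \<longleftrightarrow> (\<forall>f :: nat \<Rightarrow> 'a set.
     (\<forall>n. is_ideal (f n)) \<and> (\<forall>n. f n \<subseteq> f (Suc n)) \<longrightarrow> (\<exists>N. \<forall>n\<ge>N. f n = f N))"

text \<open>F-finite: F_*R is a finitely generated R-module (r acts on F_*R via r^p).\<close>
definition F_finite :: "nat \<Rightarrow> 'a::comm_ring_1 itself \<Rightarrow> bool" where
  "F_finite p _ \<longleftrightarrow> (\<exists>S :: 'a set. finite S \<and> (\<forall>x. \<exists>c. x = (\<Sum>s\<in>S. c s ^ p * s)))"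

text \<open>Elements of C_{e,R} = Hom_R(F^e_* R, R), viewed as maps R \<Rightarrow> R.\<close>
definition cartier_map :: "nat \<Rightarrow> nat \<Rightarrow> ('a::comm_ring_1 \<Rightarrow> 'a) \<Rightarrow> bool" where
  "cartier_map p e \<phi> \<longleftrightarrow> (\<forall>x y. \<phi> (x + y) = \<phi> x + \<phi> y) \<and> (\<forall>r x. \<phi> (r ^ (p ^ e) * x) = r * \<phi> x)"

text \<open>A pair (R, C): C is a graded R-subalgebra of C_R = \<Oplus>_e C_{e,R}, with product
  \<phi>\<cdot>\<phi>' = \<phi> \<circ> F^e_*\<phi>' (i.e. composition), containing C_0 = C_{0,R} = R.\<close>
definition cartier_pair :: "nat \<Rightarrow> (nat \<Rightarrow> ('a::comm_ring_1 \<Rightarrow> 'a) set) \<Rightarrow> bool" where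
  "cartier_pair p C \<longleftrightarrow>
     (\<forall>e. \<forall>\<phi>\<in>C e. cartier_map p e \<phi>) \<and>
     C 0 = {(\<lambda>x. r * x) | r. True} \<and>
     (\<forall>e. (\<lambda>x. 0) \<in> C e) \<and>
     (\<forall>e. \<forall>\<phi>\<in>C e. \<forall>\<psi>\<in>C e. (\<lambda>x. \<phi> x + \<psi> x) \<in> C e) \<and>
     (\<forall>e e'. \<forall>\<phi>\<in>C e. \<forall>\<psi>\<in>C e'. \<phi> \<circ> \<psi> \<in> C (e + e'))"

definition C_ideal :: "(nat \<Rightarrow> ('a::comm_ring_1 \<Rightarrow> 'a) set) \<Rightarrow> 'a set \<Rightarrow> bool" where
  "C_ideal C I \<longleftrightarrow> is_ideal I \<and> (\<forall>e. \<forall>\<phi>\<in>C e. \<forall>x\<in>I. \<phi> x \<in> I)"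

definition Cplus :: "(nat \<Rightarrow> ('a::comm_ring_1 \<Rightarrow> 'a) set) \<Rightarrow> 'a \<Rightarrow> 'a set" where
  "Cplus C b = ideal_span {\<phi> (r * b) | e \<phi> r. e > 0 \<and> \<phi> \<in> C e}"

definition center_of_F_purity :: "(nat \<Rightarrow> ('a::comm_ring_1 \<Rightarrow> 'a) set) \<Rightarrow> 'a set \<Rightarrow> bool" where
  "center_of_F_purity C P \<longleftrightarrow> prime_ideal P \<and> C_ideal C P \<and> \<not> Cplus C 1 \<subseteq> P"

definition minimal_primes :: "'a::comm_ring_1 set \<Rightarrow> 'a set set" where
  "minimal_primes I = {P. prime_ideal P \<and> I \<subseteq> P \<and>
      (\<forall>Q. prime_ideal Q \<and> I \<subseteq> Q \<and> Q \<subseteq> P \<longrightarrow> Q = P)}"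

text \<open>Associated primes of R/I: primes of the form (I : x).\<close>
definition ass_primes :: "'a::comm_ring_1 set \<Rightarrow> 'a set set" where
  "ass_primes I = {P. prime_ideal P \<and> (\<exists>x. P = {r. r * x \<in> I})}"

definition U_set :: "'a::comm_ring_1 set \<Rightarrow> 'a set" where
  "U_set I = \<Union>(ass_primes I)"

definition nondegenerate_along :: "(nat \<Rightarrow> ('a::comm_ring_1 \<Rightarrow> 'a) set) \<Rightarrow> 'a set \<Rightarrow> bool" where
  "nondegenerate_along C I \<longleftrightarrow> (\<forall>P\<in>minimal_primes I. center_of_F_purity C P)"

definition purely_F_regular_along :: "(nat \<Rightarrow> ('a::comm_ring_1 \<Rightarrow> 'a) set) \<Rightarrow> 'a set \<Rightarrow> bool" where
  "purely_F_regular_along C I \<longleftrightarrow> nondegenerate_along C I \<and>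
     (\<forall>J. C_ideal C J \<and> J \<noteq> UNIV \<longrightarrow> (\<exists>P\<in>minimal_primes I. J \<subseteq> P))"

definition principal_test_element :: "(nat \<Rightarrow> ('a::comm_ring_1 \<Rightarrow> 'a) set) \<Rightarrow> 'a set \<Rightarrow> 'a \<Rightarrow> bool" where
  "principal_test_element C I c \<longleftrightarrow> c \<notin> U_set I \<and>
     (\<forall>r. r \<notin> U_set I \<longrightarrow> (\<exists>e>0. \<exists>\<phi>\<in>C e. \<phi> r = c))"

definition test_ideal :: "(nat \<Rightarrow> ('a::comm_ring_1 \<Rightarrow> 'a) set) \<Rightarrow> 'a set \<Rightarrow> 'a set" where
  "test_ideal C I = \<Inter>{J. C_ideal C J \<and> \<not> J \<subseteq> U_set I}"

definition test_element :: "(nat \<Rightarrow> ('a::comm_ring_1 \<Rightarrow> 'a) set) \<Rightarrow> 'a set \<Rightarrow> 'a \<Rightarrow> bool" where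
  "test_element C I b \<longleftrightarrow> b \<in> test_ideal C I \<and> b \<notin> U_set I"

end

theory Submission
  imports Defs
begin

lemma ideal_0: "is_ideal I \<Longrightarrow> 0 \<in> I" by (simp add: is_ideal_def)
lemma ideal_add: "is_ideal I \<Longrightarrow> x\<in>I \<Longrightarrow> y\<in>I \<Longrightarrow> x+y\<in>I" by (simp add: is_ideal_def)
lemma ideal_mult: "is_ideal I \<Longrightarrow> x\<in>I \<Longrightarrow> r*x \<in> I" by (simp add: is_ideal_def)
lemma ideal_mult2: "is_ideal I \<Longrightarrow> x\<in>I \<Longrightarrow> x*r \<in> I" by (metis ideal_mult mult.commute)
lemma ideal_UNIV: "is_ideal I \<Longrightarrow> 1\<in>I \<Longrightarrow> I = UNIV"
  by (metis UNIV_eq_I ideal_mult mult.right_neutral)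
lemma ideal_sum: "finite S \<Longrightarrow> is_ideal I \<Longrightarrow> (\<forall>i\<in>S. f i \<in> I) \<Longrightarrow> sum f S \<in> I"
  by (induction S rule: finite_induct) (auto intro: ideal_0 ideal_add)
lemma ideal_prod: "is_ideal P \<Longrightarrow> finite S \<Longrightarrow> i\<in>S \<Longrightarrow> f i \<in> P \<Longrightarrow> prod f S \<in> P"
  by (simp add: prod.remove ideal_mult2)
lemma prime_prod: "finite S \<Longrightarrow> prime_ideal P \<Longrightarrow> (\<forall>i\<in>S. f i \<notin> P) \<Longrightarrow> prod f S \<notin> P"
proof (induction S rule: finite_induct)
  case empty thus ?case unfolding prime_ideal_def using ideal_UNIV by auto
next
  case (insert x F) thus ?case unfolding prime_ideal_def by auto
qed
lemma prime_1: "prime_ideal P \<Longrightarrow> 1 \<notin> P"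
  unfolding prime_ideal_def using ideal_UNIV by auto

lemma span_ideal: "is_ideal (ideal_span S)"
  unfolding ideal_span_def is_ideal_def by auto
lemma span_sub: "S \<subseteq> ideal_span S" unfolding ideal_span_def by auto
lemma span_least: "is_ideal J \<Longrightarrow> S \<subseteq> J \<Longrightarrow> ideal_span S \<subseteq> J"
  unfolding ideal_span_def by auto

lemma binom_ideal:
  assumes I: "is_ideal I" and x: "x^m \<in> I" and y: "y^n \<in> I"
  shows "(x+y)^(m+n) \<in> I"
proof -
  have "(x+y)^(m+n) = (\<Sum>k\<le>m+n. of_nat ((m+n) choose k) * x^k * y^(m+n-k))"
    by (rule binomial_ring)
  also have "\<dots> \<in> I"
  proof (rule ideal_sum[OF _ I], simp, intro ballI)
    fix k assume "k \<in> {..m+n}"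
    show "of_nat ((m+n) choose k) * x^k * y^(m+n-k) \<in> I"
    proof (cases "m \<le> k")
      case True
      then have "x^k = x^m * x^(k-m)" by (metis le_add_diff_inverse power_add)
      then show ?thesis using ideal_mult[OF I x] ideal_mult2[OF I x]
        by (metis I ideal_mult ideal_mult2 mult.assoc)
    next
      case False
      then have "y^(m+n-k) = y^n * y^(m-k)"
        by (metis add.commute add_diff_assoc2 less_imp_le not_le power_add)
      then show ?thesis by (metis I ideal_mult ideal_mult2 y mult.assoc)
    qed
  qed
  finally show ?thesis .
qed

lemma noeth_wf:
  assumes noeth: "noetherian_ring TYPE('a::comm_ring_1)"
  shows "wf {(J,I::'a set). is_ideal I \<and> is_ideal J \<and> I \<subset> J}"
  unfolding wf_iff_no_infinite_down_chain
proof (rule notI)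
  assume "\<exists>f. \<forall>i. (f (Suc i), f i) \<in> {(J,I::'a set). is_ideal I \<and> is_ideal J \<and> I \<subset> J}"
  then obtain f :: "nat \<Rightarrow> 'a set" where f: "\<forall>i. (f (Suc i), f i) \<in> {(J,I::'a set). is_ideal I \<and> is_ideal J \<and> I \<subset> J}"
    by blast
  have f1: "\<forall>n. is_ideal (f n)" using f by simp
  have f2: "\<forall>n. f n \<subseteq> f (Suc n)" using f by auto
  from noeth have "(\<forall>n. is_ideal (f n)) \<and> (\<forall>n. f n \<subseteq> f (Suc n)) \<longrightarrow> (\<exists>N. \<forall>n\<ge>N. f n = f N)"
    unfolding noetherian_ring_def by blast
  with f1 f2 obtain N where N: "\<forall>n\<ge>N. f n = f N" by blast
  then have "f (Suc N) = f N" using le_Suc_eq by blast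
  moreover have "f N \<subset> f (Suc N)" using f by simp
  ultimately show False by simp
qed

definition radI :: "'a::comm_ring_1 set \<Rightarrow> 'a set" where
  "radI K = {z. \<exists>n. z^n \<in> K}"

lemma radI_radical: assumes K: "is_ideal K" shows "radical_ideal (radI K)"
  unfolding radical_ideal_def is_ideal_def radI_def
proof (intro conjI allI ballI impI)
  show "0 \<in> {z. \<exists>n. z ^ n \<in> K}" using ideal_0[OF K] by (auto intro: exI[of _ 1])
next
  fix x y assume "x \<in> {z. \<exists>n. z ^ n \<in> K}" "y \<in> {z. \<exists>n. z ^ n \<in> K}"
  then obtain m n where "x^m \<in> K" "y^n \<in> K" by auto
  then show "x + y \<in> {z. \<exists>n. z ^ n \<in> K}" using binom_ideal[OF K] by blast
next
  fix r x assume "x \<in> {z. \<exists>n. z ^ n \<in> K}"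
  then obtain m where "x^m \<in> K" by auto
  then have "(r*x)^m \<in> K" using ideal_mult[OF K] by (simp add: power_mult_distrib)
  then show "r * x \<in> {z. \<exists>n. z ^ n \<in> K}" by auto
next
  fix x n assume "x ^ n \<in> {z. \<exists>n. z ^ n \<in> K}"
  then obtain m where "(x^n)^m \<in> K" by auto
  then have "x^(n*m) \<in> K" by (simp add: power_mult)
  then show "x \<in> {z. \<exists>n. z ^ n \<in> K}" by blast
qed

definition addx :: "'a::comm_ring_1 set \<Rightarrow> 'a \<Rightarrow> 'a set" where
  "addx I x = {i + s*x | i s. i \<in> I}"

lemma addx_ideal: assumes I: "is_ideal I" shows "is_ideal (addx I x)"
  unfolding is_ideal_def addx_def
proof (intro conjI ballI allI)
  show "0 \<in> {i + s * x |i s. i \<in> I}" using ideal_0[OF I] by (auto intro!: exI[of _ 0])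
next
  fix a b assume "a \<in> {i + s * x |i s. i \<in> I}" "b \<in> {i + s * x |i s. i \<in> I}"
  then obtain i s j t where "a = i + s*x" "b = j + t*x" "i\<in>I" "j\<in>I" by auto
  then show "a + b \<in> {i + s * x |i s. i \<in> I}"
    by (intro CollectI exI[of _ "i+j"] exI[of _ "s+t"]) (auto simp: algebra_simps ideal_add[OF I])
next
  fix r a assume "a \<in> {i + s * x |i s. i \<in> I}"
  then obtain i s where "a = i + s*x" "i\<in>I" by auto
  then show "r * a \<in> {i + s * x |i s. i \<in> I}"
  proof -
    have "r * a = r*i + (r*s)*x" using \<open>a = i + s*x\<close> by (simp add: algebra_simps)
    moreover have "r*i \<in> I" using ideal_mult[OF I \<open>i\<in>I\<close>] .
    ultimately show ?thesis by blast
  qed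
qed

lemma decomp_step:
  fixes I :: "'a::comm_ring_1 set"
  assumes IH: "\<forall>J. (J, I) \<in> {(J,I). is_ideal I \<and> is_ideal J \<and> I \<subset> J} \<longrightarrow>
      radical_ideal J \<longrightarrow> (\<exists>M. finite M \<and> (\<forall>P\<in>M. prime_ideal P) \<and> J = \<Inter>M)"
    and rad: "radical_ideal I"
  shows "\<exists>M. finite M \<and> (\<forall>P\<in>M. prime_ideal P) \<and> I = \<Inter>M"
proof -
  have I: "is_ideal I" using rad radical_ideal_def by auto
  show ?thesis
  proof (cases "I = UNIV")
    case True then show ?thesis by (intro exI[of _ "{}"]) auto
  next
    case nU: False
    show ?thesis
    proof (cases "prime_ideal I")
      case True then show ?thesis by (intro exI[of _ "{I}"]) auto
    next
      case False
      then obtain x y where xy: "x*y \<in> I" "x \<notin> I" "y \<notin> I" using I nU prime_ideal_def by blast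
      have sub: "I \<subset> radI (addx I z)" if "z \<notin> I" for z
      proof
        show "I \<subseteq> radI (addx I z)"
        proof
          fix w assume "w \<in> I"
          then have "w^1 \<in> addx I z" unfolding addx_def
            by (metis (mono_tags, lifting) CollectI add.right_neutral mult_zero_left power_one_right)
          then show "w \<in> radI (addx I z)" unfolding radI_def by blast
        qed
        have "z^1 \<in> addx I z" unfolding addx_def using ideal_0[OF I]
          by (metis (mono_tags, lifting) CollectI add_0 mult_1 power_one_right)
        then have "z \<in> radI (addx I z)" unfolding radI_def by blast
        then show "I \<noteq> radI (addx I z)" using that by auto
      qed
      have rz: "radical_ideal (radI (addx I z))" for z by (rule radI_radical[OF addx_ideal[OF I]])
      have iz: "is_ideal (radI (addx I z))" for z using rz radical_ideal_def by auto
      have IH': "\<exists>M. finite M \<and> (\<forall>P\<in>M. prime_ideal P) \<and> radI (addx I z) = \<Inter>M" if "z \<notin> I" for z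
      proof -
        have "(radI (addx I z), I) \<in> {(J,I). is_ideal I \<and> is_ideal J \<and> I \<subset> J}"
          using sub[OF that] iz[of z] I by simp
        then show ?thesis using IH rz[of z] by blast
      qed
      obtain Mx where Mx: "finite Mx" "\<forall>P\<in>Mx. prime_ideal P" "radI (addx I x) = \<Inter>Mx"
        using IH'[OF xy(2)] by blast
      obtain My where My: "finite My" "\<forall>P\<in>My. prime_ideal P" "radI (addx I y) = \<Inter>My"
        using IH'[OF xy(3)] by blast
      have "radI (addx I x) \<inter> radI (addx I y) \<subseteq> I"
      proof
        fix z assume "z \<in> radI (addx I x) \<inter> radI (addx I y)"
        then obtain m n i s j t where zz: "z^m = i + s*x" "z^n = j + t*y" "i \<in> I" "j \<in> I"
          unfolding radI_def addx_def by auto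
        have "z^(m+n) = (i + s*x) * (j + t*y)" by (simp add: power_add zz(1)[symmetric] zz(2)[symmetric])
        also have "\<dots> = i*j + i*(t*y) + j*(s*x) + (s*t)*(x*y)" by (simp add: algebra_simps)
        finally have "z^(m+n) = i*j + i*(t*y) + j*(s*x) + (s*t)*(x*y)" .
        also have "\<dots> \<in> I"
        proof -
          have "i*j \<in> I" "i*(t*y) \<in> I" "j*(s*x) \<in> I" "(s*t)*(x*y) \<in> I"
            using zz xy I ideal_mult ideal_mult2 by blast+
          then show ?thesis using I ideal_add by blast
        qed
        finally show "z \<in> I" using rad radical_ideal_def by blast
      qed
      moreover have "I \<subseteq> radI (addx I x) \<inter> radI (addx I y)"
        using sub[OF xy(2)] sub[OF xy(3)] by auto
      ultimately have "I = radI (addx I x) \<inter> radI (addx I y)" by blast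
      then have "I = \<Inter>(Mx \<union> My)" unfolding Mx(3) My(3) by auto
      then show ?thesis using Mx My by (intro exI[of _ "Mx \<union> My"]) auto
    qed
  qed
qed

lemma radical_decomp:
  assumes noeth: "noetherian_ring TYPE('a::comm_ring_1)" and rad: "radical_ideal (I::'a set)"
  shows "\<exists>M. finite M \<and> (\<forall>P\<in>M. prime_ideal P) \<and> I = \<Inter>M"
proof -
  have "radical_ideal I \<longrightarrow> (\<exists>M. finite M \<and> (\<forall>P\<in>M. prime_ideal P) \<and> I = \<Inter>M)"
    apply (rule wf_induct[OF noeth_wf[OF noeth]])
    using decomp_step by blast
  with rad show ?thesis by blast
qed

lemma prime_over_inter:
  assumes Q: "prime_ideal Q" and fin: "finite M0" and id: "\<forall>P\<in>M0. is_ideal P" and sub: "\<Inter>M0 \<subseteq> Q"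
  shows "\<exists>P\<in>M0. P \<subseteq> Q"
proof (rule ccontr)
  assume "\<not> ?thesis"
  then have ex: "\<forall>P\<in>M0. \<exists>x. x \<in> P \<and> x \<notin> Q" by blast
  from bchoice[OF ex] obtain f where f: "\<forall>P\<in>M0. f P \<in> P \<and> f P \<notin> Q" by blast
  have "prod f M0 \<in> \<Inter>M0"
  proof
    fix P assume "P \<in> M0" then show "prod f M0 \<in> P" using ideal_prod[OF _ fin] id f by blast
  qed
  moreover have "prod f M0 \<notin> Q" using prime_prod[OF fin Q] f by blast
  ultimately show False using sub by blast
qed

context
  fixes a :: "'a::comm_ring_1 set" and M0 :: "'a set set"
  assumes fin: "finite M0" and pr: "\<forall>P\<in>M0. prime_ideal P" and aM: "a = \<Inter>M0"
begin

lemma M0_ideal: "\<forall>P\<in>M0. is_ideal P" using pr prime_ideal_def by auto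

lemma prime_contains_min:
  assumes Q: "prime_ideal Q" "a \<subseteq> Q"
  shows "\<exists>P\<in>minimal_primes a. P \<subseteq> Q"
proof -
  let ?F = "{P\<in>M0. P \<subseteq> Q}"
  have "\<Inter>M0 \<subseteq> Q" using Q(2) aM by simp
  then have "?F \<noteq> {}" using prime_over_inter[OF Q(1) fin M0_ideal] by blast
  moreover have "finite ?F" using fin by simp
  ultimately obtain P where P: "P \<in> ?F" "\<forall>P'\<in>?F. P' \<le> P \<longrightarrow> P = P'"
    using finite_has_minimal[of ?F] by blast
  have "P \<in> minimal_primes a"
    unfolding minimal_primes_def
  proof (intro CollectI conjI allI impI)
    show "prime_ideal P" using P pr by blast
    have "P \<in> M0" using P by blast
    then show "a \<subseteq> P" unfolding aM by (rule Inter_lower)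
    fix Q' assume Q': "prime_ideal Q' \<and> a \<subseteq> Q' \<and> Q' \<subseteq> P"
    then have "\<Inter>M0 \<subseteq> Q'" using aM by simp
    then obtain P' where "P' \<in> M0" "P' \<subseteq> Q'" using prime_over_inter[OF _ fin M0_ideal] Q' by blast
    then have P'P: "P' \<subseteq> P" using Q' by (meson order_trans)
    have PQ: "P \<subseteq> Q" using P by blast
    have "P' \<in> ?F" using \<open>P' \<in> M0\<close> P'P PQ by blast
    then have "P = P'" using P(2) P'P by blast
    then show "Q' = P" using Q' \<open>P' \<subseteq> Q'\<close> by blast
  qed
  then show ?thesis using P by blast
qed

lemma min_sub_M0: "minimal_primes a \<subseteq> M0"
proof
  fix P assume P: "P \<in> minimal_primes a"
  then have Pp: "prime_ideal P" "a \<subseteq> P" unfolding minimal_primes_def by auto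
  have "\<Inter>M0 \<subseteq> P" using Pp aM by simp
  then obtain P0 where "P0 \<in> M0" "P0 \<subseteq> P" using prime_over_inter[OF _ fin M0_ideal] Pp by blast
  moreover have "prime_ideal P0" using \<open>P0 \<in> M0\<close> pr by blast
  moreover have "a \<subseteq> P0" using \<open>P0 \<in> M0\<close> unfolding aM by (rule Inter_lower)
  ultimately have "P0 = P" using P unfolding minimal_primes_def by blast
  then show "P \<in> M0" using \<open>P0 \<in> M0\<close> by simp
qed

lemma min_finite: "finite (minimal_primes a)"
  using min_sub_M0 fin finite_subset by blast

lemma a_inter_min: "a = \<Inter>(minimal_primes a)"
proof
  show "a \<subseteq> \<Inter>(minimal_primes a)" unfolding minimal_primes_def by auto
  show "\<Inter>(minimal_primes a) \<subseteq> a"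
  proof
    fix x assume x: "x \<in> \<Inter>(minimal_primes a)"
    have "x \<in> P0" if "P0 \<in> M0" for P0
    proof -
      have "prime_ideal P0" using that pr by auto
      moreover have "a \<subseteq> P0" using that unfolding aM by (rule Inter_lower)
      ultimately obtain P where "P \<in> minimal_primes a" "P \<subseteq> P0" using prime_contains_min by blast
      then show ?thesis using x by blast
    qed
    then show "x \<in> a" using aM by blast
  qed
qed

lemma min_is_ass:
  assumes P: "P \<in> minimal_primes a"
  shows "P \<in> ass_primes a"
proof -
  let ?S = "minimal_primes a - {P}"
  have Pp: "prime_ideal P" "a \<subseteq> P" using P unfolding minimal_primes_def by auto
  have ex: "\<forall>Q\<in>?S. \<exists>x. x \<in> Q \<and> x \<notin> P"
  proof
    fix Q assume Q: "Q \<in> ?S"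
    show "\<exists>x. x \<in> Q \<and> x \<notin> P"
    proof (rule ccontr)
      assume "\<not> ?thesis"
      then have "Q \<subseteq> P" by blast
      moreover have "prime_ideal Q" "a \<subseteq> Q" using Q unfolding minimal_primes_def by auto
      ultimately have "Q = P" using P unfolding minimal_primes_def by blast
      then show False using Q by blast
    qed
  qed
  from bchoice[OF ex] obtain f where f: "\<forall>Q\<in>?S. f Q \<in> Q \<and> f Q \<notin> P" by blast
  define x where "x = prod f ?S"
  have finS: "finite ?S" using min_finite by simp
  have xP: "x \<notin> P" unfolding x_def using prime_prod[OF finS Pp(1)] f by blast
  have xQ: "x \<in> Q" if "Q \<in> ?S" for Q
  proof -
    have "is_ideal Q" using that unfolding minimal_primes_def prime_ideal_def by auto
    then show ?thesis unfolding x_def using ideal_prod[OF _ finS that] f that by blast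
  qed
  have "P = {r. r * x \<in> a}"
  proof (intro set_eqI iffI)
    fix r assume "r \<in> P"
    then have rP: "r * x \<in> P" using Pp(1) ideal_mult2 prime_ideal_def by blast
    have "r * x \<in> Q" if "Q \<in> minimal_primes a" for Q
    proof (cases "Q = P")
      case True then show ?thesis using rP by simp
    next
      case False
      then have "x \<in> Q" using xQ that by blast
      moreover have "is_ideal Q" using that unfolding minimal_primes_def prime_ideal_def by auto
      ultimately show ?thesis using ideal_mult by blast
    qed
    then have "r * x \<in> \<Inter>(minimal_primes a)" by blast
    then have "r * x \<in> a" using a_inter_min by simp
    then show "r \<in> {r. r * x \<in> a}" by simp
  next
    fix r assume "r \<in> {r. r * x \<in> a}"
    then have "r * x \<in> P" using Pp(2) by blast
    then show "r \<in> P" using Pp(1) xP prime_ideal_def by blast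
  qed
  then show ?thesis unfolding ass_primes_def using Pp(1) by blast
qed

lemma ass_in_min:
  assumes Q: "Q \<in> ass_primes a"
  shows "\<exists>P\<in>minimal_primes a. Q \<subseteq> P"
proof -
  obtain x where Qp: "prime_ideal Q" and Qx: "Q = {r. r * x \<in> a}" using Q unfolding ass_primes_def by blast
  have "x \<notin> a"
  proof
    assume "x \<in> a"
    then have "1 \<in> Q" using Qx by simp
    then show False using prime_1[OF Qp] by blast
  qed
  then have "x \<notin> \<Inter>(minimal_primes a)" using a_inter_min by simp
  then obtain P where P: "P \<in> minimal_primes a" "x \<notin> P" by blast
  have "Q \<subseteq> P"
  proof
    fix s assume "s \<in> Q"
    then have "s * x \<in> P" using Qx P(1) unfolding minimal_primes_def by blast
    then show "s \<in> P" using P unfolding minimal_primes_def prime_ideal_def by blast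
  qed
  then show ?thesis using P by blast
qed

end

lemma prime_avoidance:
  "finite S \<Longrightarrow> (\<forall>P\<in>S. prime_ideal P) \<Longrightarrow> is_ideal J \<Longrightarrow> J \<subseteq> \<Union>S \<Longrightarrow> \<exists>P\<in>S. J \<subseteq> P"
proof (induction S rule: finite_psubset_induct)
  case (psubset S)
  have prS: "\<forall>P\<in>S. prime_ideal P" and J: "is_ideal J" and JS: "J \<subseteq> \<Union>S" using psubset.prems by auto
  show ?case
  proof (rule ccontr)
    assume nc: "\<not> ?thesis"
    have notsub: "\<not> J \<subseteq> \<Union>(S - {P})" if "P \<in> S" for P
    proof
      assume JP: "J \<subseteq> \<Union>(S - {P})"
      have sb: "S - {P} \<subset> S" using that by blast
      have pp: "\<forall>P'\<in>S - {P}. prime_ideal P'" using prS by blast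
      have "\<exists>Q\<in>S - {P}. J \<subseteq> Q" by (rule psubset.IH[OF sb pp J JP])
      then obtain Q where "Q \<in> S - {P}" "J \<subseteq> Q" by blast
      then show False using nc by blast
    qed
    have "0 \<in> J" using ideal_0[OF J] .
    then have "0 \<in> \<Union>S" using JS by (rule rev_subsetD)
    then obtain P0 where P0: "P0 \<in> S" by (rule UnionE)
    show False
    proof (cases "S = {P0}")
      case True then have "J \<subseteq> P0" using JS by simp
        then show False using nc P0 by blast
    next
      case False
      have ex: "\<forall>P\<in>S. \<exists>x. x \<in> J \<and> x \<notin> \<Union>(S - {P})" using notsub by blast
      from bchoice[OF ex] obtain g where g: "\<forall>P\<in>S. g P \<in> J \<and> g P \<notin> \<Union>(S - {P})" by blast
      have gP: "g P \<in> P" if "P \<in> S" for P using g that JS by blast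
      let ?T = "S - {P0}"
      have finT: "finite ?T" using psubset.hyps by simp
      define y where "y = g P0 + prod g ?T"
      have "prod g ?T \<in> J"
      proof -
        obtain P1 where "P1 \<in> ?T" using False P0 by blast
        then show ?thesis using ideal_prod[OF J finT] g by blast
      qed
      then have "y \<in> J" unfolding y_def using g P0 J ideal_add by blast
      then obtain Q where Q: "Q \<in> S" "y \<in> Q" using JS by blast
      have Qp: "prime_ideal Q" using Q prS by blast
      have Qi: "is_ideal Q" using Qp prime_ideal_def by blast
      have neg: "- a \<in> Q" if "a \<in> Q" for a using ideal_mult[OF Qi that, of "-1"] by simp
      show False
      proof (cases "Q = P0")
        case True
        then have g0: "g P0 \<in> Q" using gP[OF P0] by simp
        have "prod g ?T = y + - g P0" unfolding y_def by simp
        also have "\<dots> \<in> Q" using ideal_add[OF Qi Q(2) neg[OF g0]] .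
        finally have "prod g ?T \<in> Q" .
        moreover have "\<forall>P\<in>?T. g P \<notin> Q"
        proof
          fix P assume PT: "P \<in> ?T"
          then have "Q \<in> S - {P}" using True P0 by blast
          moreover have "g P \<notin> \<Union>(S - {P})" using g PT by blast
          ultimately show "g P \<notin> Q" by blast
        qed
        ultimately show False using prime_prod[OF finT Qp] by blast
      next
        case False
        then have "Q \<in> ?T" using Q by blast
        then have "prod g ?T \<in> Q" using ideal_prod[OF Qi finT] gP by blast
        then have pQ: "prod g ?T \<in> Q" .
        have "g P0 = y + - prod g ?T" unfolding y_def by simp
        also have "\<dots> \<in> Q" using ideal_add[OF Qi Q(2) neg[OF pQ]] .
        finally have "g P0 \<in> Q" .
        moreover have "Q \<in> S - {P0}" using False Q(1) by blast
        moreover have "g P0 \<notin> \<Union>(S - {P0})" using g P0 by blast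
        ultimately show False by blast
      qed
    qed
  qed
qed

lemma cm_add: "cartier_map p e \<phi> \<Longrightarrow> \<phi> (x + y) = \<phi> x + \<phi> y" unfolding cartier_map_def by blast
lemma cm_mult: "cartier_map p e \<phi> \<Longrightarrow> \<phi> (r ^ (p ^ e) * x) = r * \<phi> x" unfolding cartier_map_def by blast
lemma cm_0: "cartier_map p e \<phi> \<Longrightarrow> \<phi> 0 = 0"
proof -
  assume c: "cartier_map p e \<phi>"
  have "\<phi> (0 + 0) = \<phi> 0 + \<phi> 0" by (rule cm_add[OF c])
  then show ?thesis by simp
qed

context
  fixes p :: nat and C :: "nat \<Rightarrow> ('a::comm_ring_1 \<Rightarrow> 'a) set"
  assumes cp: "cartier_pair p C"
begin

lemma cpall: "(\<forall>e. \<forall>\<phi>\<in>C e. cartier_map p e \<phi>) \<and> C 0 = {(\<lambda>x. r * x) | r. True} \<and>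
  (\<forall>e. (\<lambda>x. 0) \<in> C e) \<and> (\<forall>e. \<forall>\<phi>\<in>C e. \<forall>\<psi>\<in>C e. (\<lambda>x. \<phi> x + \<psi> x) \<in> C e) \<and>
  (\<forall>e e'. \<forall>\<phi>\<in>C e. \<forall>\<psi>\<in>C e'. \<phi> \<circ> \<psi> \<in> C (e + e'))"
  using cp unfolding cartier_pair_def .

lemmas cpd = cpall[THEN conjunct1] cpall[THEN conjunct2, THEN conjunct1]
  cpall[THEN conjunct2, THEN conjunct2, THEN conjunct1]
  cpall[THEN conjunct2, THEN conjunct2, THEN conjunct2, THEN conjunct1]
  cpall[THEN conjunct2, THEN conjunct2, THEN conjunct2, THEN conjunct2]

lemma C_cm: "\<phi> \<in> C e \<Longrightarrow> cartier_map p e \<phi>" using cpd(1) by blast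
lemma C_comp: "\<phi> \<in> C e \<Longrightarrow> \<psi> \<in> C e' \<Longrightarrow> \<phi> \<circ> \<psi> \<in> C (e + e')"
  using cpd(5) by blast
lemma C_zero: "(\<lambda>x. 0) \<in> C e" using cpd(3) by blast
lemma C_plus: "\<phi> \<in> C e \<Longrightarrow> \<psi> \<in> C e \<Longrightarrow> (\<lambda>x. \<phi> x + \<psi> x) \<in> C e"
  using cpd(4) by blast
lemma C_0: "C 0 = {(\<lambda>x. r * x) | r. True}" using cpd(2) .
lemma C_scal: "(\<lambda>x. r * x) \<in> C 0" unfolding C_0 by blast

lemma C_premult: assumes "\<phi> \<in> C e" shows "(\<lambda>x. \<phi> (t * x)) \<in> C e"
proof -
  have "\<phi> \<circ> (\<lambda>x. t * x) \<in> C (e + 0)" using C_comp[OF assms C_scal] .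
  then show ?thesis by (simp add: comp_def)
qed

lemma Cplus_closed:
  assumes y: "y \<in> Cplus C b" and phi: "\<phi> \<in> C e"
  shows "\<phi> (r * y) \<in> Cplus C b"
proof -
  define K where "K = {y. \<forall>e. \<forall>\<phi>\<in>C e. \<forall>r. \<phi> (r * y) \<in> Cplus C b}"
  have CI: "is_ideal (Cplus C b)" unfolding Cplus_def by (rule span_ideal)
  have "is_ideal K" unfolding is_ideal_def
  proof (intro conjI ballI allI)
    show "0 \<in> K" unfolding K_def
    proof (intro CollectI allI ballI)
      fix e \<phi> r assume ph: "\<phi> \<in> C e"
      show "\<phi> (r * 0) \<in> Cplus C b" using cm_0[OF C_cm[OF ph]] ideal_0[OF CI] by simp
    qed
  next
    fix x y assume "x \<in> K" "y \<in> K"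
    then show "x + y \<in> K" unfolding K_def
    proof (intro CollectI allI ballI)
      fix e \<phi> r assume xy: "x \<in> {y. \<forall>e. \<forall>\<phi>\<in>C e. \<forall>r. \<phi> (r * y) \<in> Cplus C b}"
        "y \<in> {y. \<forall>e. \<forall>\<phi>\<in>C e. \<forall>r. \<phi> (r * y) \<in> Cplus C b}" and ph: "\<phi> \<in> C e"
      have "\<phi> (r * (x + y)) = \<phi> (r*x) + \<phi> (r*y)" using cm_add[OF C_cm[OF ph]] by (simp add: distrib_left)
      then show "\<phi> (r * (x + y)) \<in> Cplus C b" using xy ph ideal_add[OF CI] by simp
    qed
  next
    fix r x assume "x \<in> K"
    then show "r * x \<in> K" unfolding K_def by (simp add: mult.assoc[symmetric])
  qed
  moreover have "{\<phi> (r * b) | e \<phi> r. e > 0 \<and> \<phi> \<in> C e} \<subseteq> K"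
  proof
    fix g assume "g \<in> {\<phi> (r * b) | e \<phi> r. e > 0 \<and> \<phi> \<in> C e}"
    then obtain e' \<psi> t where g: "g = \<psi> (t * b)" "e' > 0" "\<psi> \<in> C e'" by blast
    show "g \<in> K" unfolding K_def
    proof (intro CollectI allI ballI)
      fix e \<phi> r assume phi: "\<phi> \<in> C e"
      have "\<phi> (r * g) = (\<phi> \<circ> \<psi>) ((r ^ (p ^ e') * t) * b)"
        using cm_mult[OF C_cm[OF g(3)], of r "t*b"] g(1) by (simp add: mult.assoc)
      moreover have "\<phi> \<circ> \<psi> \<in> C (e + e')" using C_comp[OF phi g(3)] .
      moreover have "e + e' > 0" using g(2) by simp
      ultimately have "\<phi> (r * g) \<in> {\<phi> (r * b) | e \<phi> r. e > 0 \<and> \<phi> \<in> C e}"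
        by (intro CollectI exI[of _ "e+e'"] exI[of _ "\<phi> \<circ> \<psi>"] exI[of _ "r ^ (p ^ e') * t"]) simp
      then show "\<phi> (r * g) \<in> Cplus C b" unfolding Cplus_def using span_sub by (rule subsetD[rotated])
    qed
  qed
  ultimately have "Cplus C b \<subseteq> K" unfolding Cplus_def by (rule span_least)
  then have "y \<in> K" using y by (rule subsetD)
  then show ?thesis using phi unfolding K_def by blast
qed

lemma Cplus_Cideal: "C_ideal C (Cplus C b)"
  unfolding C_ideal_def
proof (intro conjI allI ballI)
  show "is_ideal (Cplus C b)" unfolding Cplus_def by (rule span_ideal)
  fix e \<phi> x assume "\<phi> \<in> C e" "x \<in> Cplus C b"
  then show "\<phi> x \<in> Cplus C b" using Cplus_closed[of x b \<phi> e 1] by simp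
qed

lemma Bmem: "x \<in> principal_ideal b \<Longrightarrow> y \<in> Cplus C b \<Longrightarrow> x + y \<in> {x + y | x y. x \<in> principal_ideal b \<and> y \<in> Cplus C b}"
  by blast
lemma pmem: "s * b \<in> principal_ideal b" unfolding principal_ideal_def by blast

lemma Bset_Cideal: "C_ideal C {x + y | x y. x \<in> principal_ideal b \<and> y \<in> Cplus C b}"
  (is "C_ideal C ?B")
proof -
  have CI: "is_ideal (Cplus C b)" unfolding Cplus_def by (rule span_ideal)
  have "is_ideal ?B" unfolding is_ideal_def principal_ideal_def
  proof (intro conjI ballI allI)
    show "0 \<in> {x + y |x y. x \<in> {r * b |r. True} \<and> y \<in> Cplus C b}"
      using ideal_0[OF CI] by (metis (mono_tags, lifting) CollectI add_0 mult_zero_left)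
  next
    fix u v assume "u \<in> {x + y |x y. x \<in> {r * b |r. True} \<and> y \<in> Cplus C b}"
      "v \<in> {x + y |x y. x \<in> {r * b |r. True} \<and> y \<in> Cplus C b}"
    then obtain r y s z where "u = r*b + y" "v = s*b + z" "y \<in> Cplus C b" "z \<in> Cplus C b" by blast
    moreover then have "u + v = (r+s)*b + (y+z)" by (simp add: algebra_simps)
    ultimately show "u + v \<in> {x + y |x y. x \<in> {r * b |r. True} \<and> y \<in> Cplus C b}"
      using ideal_add[OF CI] by blast
  next
    fix t u assume "u \<in> {x + y |x y. x \<in> {r * b |r. True} \<and> y \<in> Cplus C b}"
    then obtain r y where "u = r*b + y" "y \<in> Cplus C b" by blast
    moreover then have "t * u = (t*r)*b + t*y" by (simp add: algebra_simps)
    ultimately show "t * u \<in> {x + y |x y. x \<in> {r * b |r. True} \<and> y \<in> Cplus C b}"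
      using ideal_mult[OF CI] by blast
  qed
  moreover have "\<phi> u \<in> ?B" if phi: "\<phi> \<in> C e" and u: "u \<in> ?B" for e \<phi> u
  proof -
    obtain r y where ry: "u = r*b + y" "y \<in> Cplus C b" using u unfolding principal_ideal_def by blast
    have phy: "\<phi> y \<in> Cplus C b" using Cplus_closed[OF ry(2) phi, of 1] by simp
    have split: "\<phi> u = \<phi> (r*b) + \<phi> y" using ry cm_add[OF C_cm[OF phi]] by simp
    show ?thesis
    proof (cases "e = 0")
      case True
      then obtain t where "\<phi> = (\<lambda>x. t * x)" using phi C_0 by blast
      then have "\<phi> (r*b) = (t*r)*b" by simp
      then show ?thesis using split Bmem[OF pmem[of "t*r"] phy] by simp
    next
      case False
      then have "\<phi> (r*b) \<in> {\<phi> (r * b) | e \<phi> r. e > 0 \<and> \<phi> \<in> C e}"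
        using phi by (intro CollectI exI[of _ e] exI[of _ \<phi>] exI[of _ r]) simp
      then have "\<phi> (r*b) \<in> Cplus C b" unfolding Cplus_def using span_sub by (rule subsetD[rotated])
      have eq: "\<phi> u = 0 * b + (\<phi> (r*b) + \<phi> y)" using split by simp
      have "\<phi> (r*b) + \<phi> y \<in> Cplus C b" using ideal_add[OF CI \<open>\<phi> (r*b) \<in> Cplus C b\<close> phy] .
      from Bmem[OF pmem[of 0] this] show ?thesis unfolding eq[symmetric] .
    qed
  qed
  ultimately show ?thesis unfolding C_ideal_def by (intro conjI allI ballI) 
qed

end

definition Aset :: "(nat \<Rightarrow> ('a::comm_ring_1 \<Rightarrow> 'a) set) \<Rightarrow> 'a \<Rightarrow> nat \<Rightarrow> 'a set" where
  "Aset C r e = {\<phi> r | \<phi>. \<phi> \<in> C e}"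

lemma Amem: "\<phi> \<in> C e \<Longrightarrow> \<phi> r \<in> Aset C r e" unfolding Aset_def by blast

context
  fixes p :: nat and C :: "nat \<Rightarrow> ('a::comm_ring_1 \<Rightarrow> 'a) set"
  assumes cp: "cartier_pair p C" and p0: "p > 0"
begin

lemma A_ideal: "is_ideal (Aset C r e)"
  unfolding is_ideal_def
proof (intro conjI ballI allI)
  show "0 \<in> Aset C r e" unfolding Aset_def using C_zero[OF cp, of e] by force
next
  fix u v assume "u \<in> Aset C r e" "v \<in> Aset C r e"
  then obtain \<phi> \<psi> where "u = \<phi> r" "v = \<psi> r" "\<phi> \<in> C e" "\<psi> \<in> C e" unfolding Aset_def by blast
  then show "u + v \<in> Aset C r e" using Amem[of "\<lambda>x. \<phi> x + \<psi> x" C e r] C_plus[OF cp] by simp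
next
  fix s u assume "u \<in> Aset C r e"
  then obtain \<phi> where "u = \<phi> r" "\<phi> \<in> C e" unfolding Aset_def by blast
  then have "s * u = (\<lambda>x. \<phi> (s^(p^e) * x)) r" using cm_mult[OF C_cm[OF cp]] by simp
  moreover have "(\<lambda>x. \<phi> (s^(p^e) * x)) \<in> C e" using C_premult[OF cp \<open>\<phi> \<in> C e\<close>] .
  ultimately show "s * u \<in> Aset C r e" using Amem by metis
qed

lemma A_mult:
  assumes u: "u \<in> Aset C r e" and v: "v \<in> Aset C r e'"
  shows "u * v \<in> Aset C r (e + e')"
proof -
  obtain \<phi> where ph: "u = \<phi> r" "\<phi> \<in> C e" using u unfolding Aset_def by blast
  obtain \<psi> where ps: "v = \<psi> r" "\<psi> \<in> C e'" using v unfolding Aset_def by blast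
  define c where "c = (v^(p^e - 1))^(p^e')"
  have pe: "p^e \<ge> 1" using p0 by simp
  have "\<psi> (c * r) = v^(p^e - 1) * v" unfolding c_def using cm_mult[OF C_cm[OF cp ps(2)]] ps(1) by simp
  also have "\<dots> = v^(p^e)" using pe by (metis le_add_diff_inverse2 power_add power_one_right)
  finally have e1: "\<psi> (c * r) = v^(p^e)" .
  define \<chi> where "\<chi> = (\<lambda>y. \<phi> (r * y)) \<circ> (\<lambda>x. \<psi> (c * x))"
  have "\<chi> r = \<phi> (v^(p^e) * r)" unfolding \<chi>_def using e1 by (simp add: mult.commute)
  also have "\<dots> = v * u" using cm_mult[OF C_cm[OF cp ph(2)]] ph(1) by simp
  finally have "\<chi> r = u * v" by (simp add: mult.commute)
  moreover have "\<chi> \<in> C (e + e')" unfolding \<chi>_def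
    by (rule C_comp[OF cp C_premult[OF cp ph(2)] C_premult[OF cp ps(2)]])
  ultimately show ?thesis using Amem by metis
qed

lemma A_pow: "x^n \<in> Aset C r e \<Longrightarrow> x^(n * Suc m) \<in> Aset C r (e * Suc m)"
proof (induction m)
  case 0 then show ?case by simp
next
  case (Suc m)
  have "x^(n * Suc m) * x^n \<in> Aset C r (e * Suc m + e)" using A_mult[OF Suc.IH[OF Suc.prems] Suc.prems] .
  moreover have "x^(n * Suc m) * x^n = x^(n * Suc (Suc m))" by (simp add: power_add[symmetric] algebra_simps)
  moreover have "e * Suc m + e = e * Suc (Suc m)" by simp
  ultimately show ?case by metis
qed

lemma one_in_A:
  assumes one: "1 \<in> Cplus C r"
  shows "\<exists>e>0. \<exists>\<phi>\<in>C e. \<phi> r = 1"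
proof -
  define V where "V = {x. \<exists>e>0. \<exists>n. x^n \<in> Aset C r e}"
  have "is_ideal V" unfolding is_ideal_def
  proof (intro conjI ballI allI)
    have "(0::'a)^1 \<in> Aset C r 1" using ideal_0[OF A_ideal] by simp
    then show "0 \<in> V" unfolding V_def by blast
  next
    fix x y assume "x \<in> V" "y \<in> V"
    then obtain e n e' m where xy: "e > 0" "x^n \<in> Aset C r e" "e' > 0" "y^m \<in> Aset C r e'"
      unfolding V_def by blast
    obtain k where k: "e' = Suc k" using xy(3) not0_implies_Suc by blast
    obtain l where l: "e = Suc l" using xy(1) not0_implies_Suc by blast
    have "x^(n * e') \<in> Aset C r (e * e')" using A_pow[OF xy(2), of k] k by simp
    moreover have "y^(m * e) \<in> Aset C r (e * e')" using A_pow[OF xy(4), of l] l by (simp add: mult.commute)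
    ultimately have "(x+y)^(n*e' + m*e) \<in> Aset C r (e * e')" using binom_ideal[OF A_ideal] by blast
    moreover have "e * e' > 0" using xy by simp
    ultimately show "x + y \<in> V" unfolding V_def by blast
  next
    fix s x assume "x \<in> V"
    then obtain e n where xy: "e > 0" "x^n \<in> Aset C r e" unfolding V_def by blast
    have "(s*x)^n = s^n * x^n" by (simp add: power_mult_distrib)
    then have "(s*x)^n \<in> Aset C r e" using ideal_mult[OF A_ideal xy(2)] by simp
    then show "s * x \<in> V" unfolding V_def using xy(1) by blast
  qed
  moreover have "{\<phi> (t * r) | e \<phi> t. e > 0 \<and> \<phi> \<in> C e} \<subseteq> V"
  proof
    fix g assume "g \<in> {\<phi> (t * r) | e \<phi> t. e > 0 \<and> \<phi> \<in> C e}"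
    then obtain e \<psi> t where g: "g = \<psi> (t * r)" "e > 0" "\<psi> \<in> C e" by blast
    have "(\<lambda>x. \<psi> (t * x)) \<in> C e" using C_premult[OF cp g(3)] .
    then have "g^1 \<in> Aset C r e" unfolding Aset_def g(1) by force
    then show "g \<in> V" unfolding V_def using g(2) by blast
  qed
  ultimately have "Cplus C r \<subseteq> V" unfolding Cplus_def by (rule span_least)
  then have "1 \<in> V" using one by blast
  then obtain e n where "e > 0" "(1::'a)^n \<in> Aset C r e" unfolding V_def by blast
  then show ?thesis unfolding Aset_def by auto
qed

end

theorem theorem2p12:
  fixes p :: nat and C :: "nat \<Rightarrow> ('a::comm_ring_1 \<Rightarrow> 'a) set"
    and a :: "'a set" and b :: 'a
  assumes "prime p" and "of_nat p = (0::'a)"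
    and "noetherian_ring TYPE('a)" and "F_finite p TYPE('a)"
    and "cartier_pair p C"
    and "C_ideal C a" and "radical_ideal a"
    and "nondegenerate_along C a"
    and "test_element C a b"
  shows "test_ideal C a = {x + y | x y. x \<in> principal_ideal b \<and> y \<in> Cplus C b}
    \<and> (purely_F_regular_along C a \<longleftrightarrow> principal_test_element C a 1)"
proof -
  note cp = assms(5)
  have p0: "p > 0" using assms(1) prime_gt_0_nat by blast
  obtain M0 where M0: "finite M0" "\<forall>P\<in>M0. prime_ideal P" "a = \<Inter>M0"
    using radical_decomp[OF assms(3) assms(7)] by blast
  note fpa = M0(1) M0(2) M0(3)
  let ?B = "{x + y | x y. x \<in> principal_ideal b \<and> y \<in> Cplus C b}"
  have bT: "b \<in> test_ideal C a" and bU: "b \<notin> U_set a" using assms(9) unfolding test_element_def by auto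
  have part1: "test_ideal C a = ?B"
  proof
    have "C_ideal C ?B" by (rule Bset_Cideal[OF cp])
    moreover have "b \<in> ?B"
    proof -
      have "0 \<in> Cplus C b" unfolding Cplus_def using ideal_0[OF span_ideal] .
      from Bmem[OF cp pmem[OF cp, where s=1] this] show ?thesis by simp
    qed
    then have "\<not> ?B \<subseteq> U_set a" using bU by blast
    ultimately show "test_ideal C a \<subseteq> ?B" unfolding test_ideal_def by blast
  next
    show "?B \<subseteq> test_ideal C a" unfolding test_ideal_def
    proof (rule Inter_greatest)
      fix J assume J: "J \<in> {J. C_ideal C J \<and> \<not> J \<subseteq> U_set a}"
      then have Jc: "C_ideal C J" by blast
      have Ji: "is_ideal J" using Jc C_ideal_def by blast
      have bJ: "b \<in> J" using bT J unfolding test_ideal_def by blast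
      have "Cplus C b \<subseteq> J" unfolding Cplus_def
      proof (rule span_least[OF Ji], rule subsetI)
        fix g assume "g \<in> {\<phi> (r * b) | e \<phi> r. e > 0 \<and> \<phi> \<in> C e}"
        then obtain e \<phi> r where g: "g = \<phi> (r * b)" "\<phi> \<in> C e" by blast
        have "r * b \<in> J" using ideal_mult[OF Ji bJ] .
        then show "g \<in> J" using g Jc unfolding C_ideal_def by blast
      qed
      moreover have "principal_ideal b \<subseteq> J" unfolding principal_ideal_def using ideal_mult[OF Ji bJ] by blast
      ultimately show "?B \<subseteq> J" using ideal_add[OF Ji] by blast
    qed
  qed
  have fin: "finite (minimal_primes a)" using min_finite[OF fpa] .
  have prm: "\<forall>P\<in>minimal_primes a. prime_ideal P" unfolding minimal_primes_def by blast
  have part2: "purely_F_regular_along C a \<longleftrightarrow> principal_test_element C a 1"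
  proof
    assume pfr: "purely_F_regular_along C a"
    show "principal_test_element C a 1" unfolding principal_test_element_def
    proof (intro conjI allI impI)
      show "1 \<notin> U_set a" unfolding U_set_def ass_primes_def using prime_1 by blast
    next
      fix r assume rU: "r \<notin> U_set a"
      have "Cplus C r = UNIV"
      proof (rule ccontr)
        assume nU: "Cplus C r \<noteq> UNIV"
        obtain P where P: "P \<in> minimal_primes a" "Cplus C r \<subseteq> P"
          using pfr Cplus_Cideal[OF cp, of r] nU unfolding purely_F_regular_along_def by blast
        have "P \<in> ass_primes a" using min_is_ass[OF fpa P(1)] .
        then have rP: "r \<notin> P" using rU unfolding U_set_def by blast
        have Pp: "prime_ideal P" using P(1) unfolding minimal_primes_def by blast
        then have Pi: "is_ideal P" unfolding prime_ideal_def by blast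
        have "center_of_F_purity C P" using assms(8) P(1) unfolding nondegenerate_along_def by blast
        then have ncp: "\<not> Cplus C 1 \<subseteq> P" unfolding center_of_F_purity_def by blast
        have "Cplus C 1 \<subseteq> P" unfolding Cplus_def
        proof (rule span_least[OF Pi], rule subsetI)
          fix g assume "g \<in> {\<phi> (t * 1) | e \<phi> t. e > 0 \<and> \<phi> \<in> C e}"
          then obtain e \<psi> t where g: "g = \<psi> t" "e > 0" "\<psi> \<in> C e" by auto
          have pe: "p^e \<ge> 1" using p0 by simp
          have "r * \<psi> t = \<psi> (r^(p^e) * t)" using cm_mult[OF C_cm[OF cp g(3)]] by simp
          also have "r^(p^e) * t = (r^(p^e - 1) * t) * r"
          proof -
            obtain k where k: "p^e = Suc k" using pe not0_implies_Suc by (metis not_one_le_zero)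
            have "r^(Suc k) * t = (r^k * t) * r" by (simp add: algebra_simps)
            then show ?thesis using k by simp
          qed
          finally have eq: "r * \<psi> t = \<psi> ((r^(p^e - 1) * t) * r)" .
          have "\<psi> ((r^(p^e - 1) * t) * r) \<in> {\<phi> (t * r) | e \<phi> t. e > 0 \<and> \<phi> \<in> C e}"
            using g by blast
          then have "\<psi> ((r^(p^e - 1) * t) * r) \<in> Cplus C r" unfolding Cplus_def
            using span_sub by (rule subsetD[rotated])
          then have "r * \<psi> t \<in> P" using eq P(2) by auto
          then show "g \<in> P" using Pp rP g(1) unfolding prime_ideal_def by blast
        qed
        then show False using ncp by blast
      qed
      then have "1 \<in> Cplus C r" by simp
      then show "\<exists>e>0. \<exists>\<phi>\<in>C e. \<phi> r = 1" using one_in_A[OF cp p0] by blast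
    qed
  next
    assume pt: "principal_test_element C a 1"
    show "purely_F_regular_along C a" unfolding purely_F_regular_along_def
    proof (intro conjI allI impI)
      show "nondegenerate_along C a" using assms(8) .
    next
      fix J assume J: "C_ideal C J \<and> J \<noteq> UNIV"
      have Ji: "is_ideal J" using J C_ideal_def by blast
      have "J \<subseteq> U_set a"
      proof
        fix r assume rJ: "r \<in> J"
        show "r \<in> U_set a"
        proof (rule ccontr)
          assume "r \<notin> U_set a"
          then obtain e \<phi> where "\<phi> \<in> C e" "\<phi> r = 1" using pt unfolding principal_test_element_def by blast
          then have "1 \<in> J" using J rJ unfolding C_ideal_def by metis
          then show False using ideal_UNIV[OF Ji] J by blast
        qed
      qed
      also have "U_set a \<subseteq> \<Union>(minimal_primes a)"
        unfolding U_set_def using ass_in_min[OF fpa] by blast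
      finally have "J \<subseteq> \<Union>(minimal_primes a)" .
      then show "\<exists>P\<in>minimal_primes a. J \<subseteq> P" using prime_avoidance[OF fin prm Ji] by blast
    qed
  qed
  show ?thesis using part1 part2 by blast
qed

end
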